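(* Let $\{X_t,Z_t\}$ be a mean-zero jointly stationary bivariate time series with residual spectral density $f=f_{X|Z}=f_X-f_{XZ}f_{ZX}/f_Z$, and let $\tilde f=f/\langle f\rangle_\pi$ and $F(\lambda)=\int_0^\lambda\tilde f(\omega)d\omega$. Let $R\in\mathcal{R}_L$ with Lipschitz constant $L_R$, and let $\delta>0$ be such that $$S:=\sup_{0\le\lambda\le\pi}|\pi\tilde f(\lambda)-1|>\frac{\sqrt\delta}{L_R\pi}.$$ For $\Delta>0$ let $h(\lambda)=A(\tilde f(\lambda)+\Delta)$ with $A=\langle f\rangle_\pi/(1+\pi\Delta)$, $H(\lambda)=\int_0^\lambda\tilde h(t)dt$ where $\tilde h=h/\langle h\rangle_\pi$, and let the released data be based on the privacy mechanism $\Psi_h(e^{-i\lambda})=\exp\{i\pi\tilde R(H(\lambda))\}$, where $\tilde R(x)=\mathrm{sgn}(x)R(|x|)$. Then $\Psi_h$ is $\delta$-LIP if $\Delta\in(0,B]$, where $$B=\sqrt\delta\,\big(L_R\pi^2S-\pi\sqrt\delta\big)^{-1}.$$ Moreover, if $R$ has a derivative $r$ with $r(x)>0$ for all $x\in(0,1)$, and $f(\lambda)>0$ for $0\le\lambda\le\pi$, then for every $0<\lambda<\pi$, $$|\Psi_h(e^{-i\lambda})-\Psi_f(e^{-i\lambda})|\ge\frac{\alpha\pi}{2}Q(\lambda)\,|F(\lambda)-\lambda/\pi|,$$ where $\Psi_f(e^{-i\lambda})=\exp\{i\pi\tilde R(F(\lambda))\}$, $\alpha=\Delta\pi/(1+\Delta\pi)$,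 $Q(\lambda)=\min_{x\in L(\lambda)}r(x)$, and $L(\lambda)$ is the closed line segment joining $F(\lambda)$ and $(1-\alpha)F(\lambda)+\alpha\lambda/\pi$.
   Context: Spectral densities are even functions on $[-\pi,\pi]$. Notation: $\langle u,f\rangle=(2\pi)^{-1}\int_{-\pi}^{\pi}u(\lambda)f(\lambda)d\lambda$, $\langle f\rangle=\langle1,f\rangle$, $\langle f\rangle_\pi=\pi^{-1}\int_0^\pi f(\lambda)d\lambda$. Classes: $\mathcal{R}=\{R:[0,1]\to[0,1]:R(0)=0,\ R(x)+R(1-x)=1\ \forall x\}$ and $\mathcal{R}_L=\{R\in\mathcal{R}:|R(x)-R(y)|\le L_R|x-y|\ \forall x,y\in[0,1]\}$, $L_R>0$. For a linear filter $\Psi$ (evaluated at $e^{-i\lambda}$, with $\overline{\Psi(e^{-i\lambda})}=\Psi(e^{i\lambda})$), the Linear Incremental Privacy is $\mathrm{LIP}(\Psi,f)=1-\langle\Psi,f\rangle^2/(\langle\Psi\overline\Psi,f\rangle\langle f\rangle)$, which for an all-pass filter ($|\Psi(e^{-i\lambda})|=1$) equals $1-\langle\Psi,f\rangle^2/\langle f\rangle^2$. $\Psi$ is $\delta$-LIP for $f$ if $\mathrm{LIP}(\Psi,f)\ge1-\delta$. *)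

theory Defs
  imports "HOL-Analysis.Analysis"
begin

text \<open>Spectral densities and filters are functions of the frequency lambda in [-pi,pi];
  a filter Psi is represented by lambda |-> Psi(e^{-i lambda}).\<close>

definition ip :: "(real \<Rightarrow> complex) \<Rightarrow> (real \<Rightarrow> real) \<Rightarrow> complex" where
  "ip u f = integral {-pi..pi} (\<lambda>x. u x * complex_of_real (f x)) / complex_of_real (2 * pi)"

definition avg_pi :: "(real \<Rightarrow> real) \<Rightarrow> real" where
  "avg_pi f = integral {0..pi} f / pi"

definition dint :: "real \<Rightarrow> real \<Rightarrow> (real \<Rightarrow> real) \<Rightarrow> real" where
  "dint a b g = (if a \<le> b then integral {a..b} g else - integral {b..a} g)"

definition tilde :: "(real \<Rightarrow> real) \<Rightarrow> real \<Rightarrow> real" where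
  "tilde f x = f x / (pi * avg_pi f)"

definition cdf :: "(real \<Rightarrow> real) \<Rightarrow> real \<Rightarrow> real" where
  "cdf f lam = dint 0 lam (tilde f)"

definition Rt :: "(real \<Rightarrow> real) \<Rightarrow> real \<Rightarrow> real" where
  "Rt R x = sgn x * R \<bar>x\<bar>"

definition mech :: "(real \<Rightarrow> real) \<Rightarrow> (real \<Rightarrow> real) \<Rightarrow> real \<Rightarrow> complex" where
  "mech R g lam = exp (\<i> * complex_of_real (pi * Rt R (cdf g lam)))"

definition LIP :: "(real \<Rightarrow> complex) \<Rightarrow> (real \<Rightarrow> real) \<Rightarrow> complex" where
  "LIP Psi f = 1 - (ip Psi f)\<^sup>2 / (ip (\<lambda>x. Psi x * cnj (Psi x)) f * ip (\<lambda>_. 1) f)"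

definition delta_LIP :: "real \<Rightarrow> (real \<Rightarrow> complex) \<Rightarrow> (real \<Rightarrow> real) \<Rightarrow> bool" where
  "delta_LIP \<delta> Psi f \<longleftrightarrow> LIP Psi f \<in> \<real> \<and> 1 - \<delta> \<le> Re (LIP Psi f)"

definition in_RL :: "(real \<Rightarrow> real) \<Rightarrow> real \<Rightarrow> bool" where
  "in_RL R L \<longleftrightarrow> (\<forall>x\<in>{0..1}. R x \<in> {0..1}) \<and> R 0 = 0 \<and>
     (\<forall>x\<in>{0..1}. R x + R (1 - x) = 1) \<and> L > 0 \<and>
     (\<forall>x\<in>{0..1}. \<forall>y\<in>{0..1}. \<bar>R x - R y\<bar> \<le> L * \<bar>x - y\<bar>)"

definition sup_S :: "(real \<Rightarrow> real) \<Rightarrow> real" where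
  "sup_S f = (SUP x\<in>{0..pi}. \<bar>pi * tilde f x - 1\<bar>)"

definition hfun :: "(real \<Rightarrow> real) \<Rightarrow> real \<Rightarrow> real \<Rightarrow> real" where
  "hfun f \<Delta> x = avg_pi f / (1 + pi * \<Delta>) * (tilde f x + \<Delta>)"

end

theory Submission
  imports Defs
begin


lemma cont_mult_integrable:
  fixes c g :: "real \<Rightarrow> real"
  assumes "continuous_on {a..b} c" "g integrable_on {a..b}" "\<forall>x\<in>{a..b}. g x \<ge> 0"
  shows "(\<lambda>x. c x * g x) integrable_on {a..b}"
proof -
  have "g absolutely_integrable_on {a..b}"
    using assms by (intro nonnegative_absolutely_integrable_1) auto
  moreover have "c \<in> borel_measurable (lebesgue_on {a..b})"
    using assms(1) by (intro continuous_imp_measurable_on_sets_lebesgue) auto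
  moreover have "bounded (c ` {a..b})"
    using assms(1) by (intro compact_imp_bounded compact_continuous_image) auto
  ultimately have "(\<lambda>x. c x * g x) absolutely_integrable_on {a..b}"
    by (intro absolutely_integrable_bounded_measurable_product_real) auto
  then show ?thesis using set_lebesgue_integral_eq_integral(1) by blast
qed


lemma subst_int:
  fixes w \<phi> :: "real \<Rightarrow> real"
  assumes ab: "a \<le> b" and w: "w integrable_on {a..b}" and wpos: "\<forall>x\<in>{a..b}. w x \<ge> 0"
    and phi: "continuous_on {0..integral {a..b} w} \<phi>"
  shows "integral {a..b} (\<lambda>x. \<phi> (integral {a..x} w) * w x) = integral {0..integral {a..b} w} \<phi>"
proof -
  define W where "W x = integral {a..x} w" for x
  have wsub: "w integrable_on {s..t}" if "a \<le> s" "t \<le> b" for s t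
    using w that by (intro integrable_on_subinterval[OF w]) auto
  have Wint: "integral {s..t} w = W t - W s" if "a \<le> s" "s \<le> t" "t \<le> b" for s t
  proof -
    have "integral {a..s} w + integral {s..t} w = integral {a..t} w"
      using that by (intro Henstock_Kurzweil_Integration.integral_combine wsub) auto
    then show ?thesis unfolding W_def by simp
  qed
  have Wmono: "W s \<le> W t" if "a \<le> s" "s \<le> t" "t \<le> b" for s t
  proof -
    have "0 \<le> integral {s..t} w" using wsub[of s t] that wpos by (intro integral_nonneg) auto
    then show ?thesis using Wint[OF that] by simp
  qed
  have Wa: "W a = 0" unfolding W_def by simp
  have Wb: "W b = integral {a..b} w" unfolding W_def by simp
  have Wrange: "0 \<le> W x \<and> W x \<le> W b" if "a \<le> x" "x \<le> b" for x
    using Wmono[of a x] Wmono[of x b] that Wa ab by auto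
  have Wcont: "continuous_on {a..b} W"
    unfolding W_def using w by (rule indefinite_integral_continuous_1)
  have phi': "continuous_on {0..W b} \<phi>" using phi Wb by simp
  have phiW: "continuous_on {a..b} (\<lambda>x. \<phi> (W x))"
    using Wcont phi' Wrange by (intro continuous_on_compose2[OF phi' Wcont]) auto
  have prodint: "(\<lambda>x. \<phi> (W x) * w x) integrable_on {a..b}"
    using phiW w wpos by (rule cont_mult_integrable)
  have prodsub: "(\<lambda>x. \<phi> (W x) * w x) integrable_on {s..t}" if "a \<le> s" "t \<le> b" for s t
    using that by (intro integrable_on_subinterval[OF prodint]) auto
  have phisub: "\<phi> integrable_on {u..v}" if "0 \<le> u" "v \<le> W b" for u v
    using phi' that by (intro integrable_continuous_real) (auto intro: continuous_on_subset)
  define D where "D s t = integral {s..t} (\<lambda>x. \<phi> (W x) * w x) - integral {W s..W t} \<phi>" for s t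
  have Dadd: "D s t = D s m + D m t" if "a \<le> s" "s \<le> m" "m \<le> t" "t \<le> b" for s m t
  proof -
    have "integral {s..m} (\<lambda>x. \<phi> (W x) * w x) + integral {m..t} (\<lambda>x. \<phi> (W x) * w x)
       = integral {s..t} (\<lambda>x. \<phi> (W x) * w x)"
      using that by (intro Henstock_Kurzweil_Integration.integral_combine prodsub) auto
    moreover have "integral {W s..W m} \<phi> + integral {W m..W t} \<phi> = integral {W s..W t} \<phi>"
      using that Wmono[of s m] Wmono[of m t] Wrange[of s] Wrange[of t]
      by (intro Henstock_Kurzweil_Integration.integral_combine phisub) auto
    ultimately show ?thesis unfolding D_def by linarith
  qed
  have main: "\<bar>D a b\<bar> \<le> e * (W b - W a)" if e: "e > 0" for e
  proof -
    define P where "P s t \<longleftrightarrow> (a \<le> s \<longrightarrow> t \<le> b \<longrightarrow> \<bar>D s t\<bar> \<le> e * (W t - W s))" for s t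
    have "P a b"
      using ab
    proof (induct rule: Bolzano)
      case (trans s m t)
      show ?case unfolding P_def
      proof (intro impI)
        assume h: "a \<le> s" "t \<le> b"
        have "\<bar>D s m\<bar> \<le> e * (W m - W s)" "\<bar>D m t\<bar> \<le> e * (W t - W m)"
          using trans h unfolding P_def by auto
        then show "\<bar>D s t\<bar> \<le> e * (W t - W s)"
          using Dadd[of s m t] h trans by (simp add: algebra_simps)
      qed
    next
      case (local x)
      then have Wx: "W x \<in> {0..W b}" using Wrange by auto
      obtain \<eta> where eta: "\<eta> > 0" "\<forall>u\<in>{0..W b}. dist u (W x) < \<eta> \<longrightarrow> dist (\<phi> u) (\<phi> (W x)) < e/2"
        using phi' Wx e unfolding continuous_on_iff by (meson half_gt_zero)
      obtain d where d: "d > 0" "\<forall>y\<in>{a..b}. dist y x < d \<longrightarrow> dist (W y) (W x) < \<eta>"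
        using Wcont local eta(1) unfolding continuous_on_iff by (meson atLeastAtMost_iff)
      show ?case
      proof (intro exI[of _ d] conjI allI impI)
        show "d > 0" by fact
        fix s t assume st: "s \<le> x \<and> x \<le> t \<and> t - s < d"
        show "P s t" unfolding P_def
        proof (intro impI)
          assume h: "a \<le> s" "t \<le> b"
          have Wst: "W s \<le> W t" using Wmono h st by auto
          have b1: "\<bar>\<phi> (W y) - \<phi> (W x)\<bar> \<le> e/2" if "y \<in> {s..t}" for y
          proof -
            have "dist (W y) (W x) < \<eta>" using d that h st by (auto simp: dist_real_def)
            moreover have "W y \<in> {0..W b}" using Wrange that h st by auto
            ultimately show ?thesis using eta by (auto simp: dist_real_def)
          qed
          have b2: "\<bar>\<phi> u - \<phi> (W x)\<bar> \<le> e/2" if "u \<in> {W s..W t}" for u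
          proof -
            have "dist (W s) (W x) < \<eta>" "dist (W t) (W x) < \<eta>" using d h st by (auto simp: dist_real_def)
            then have "dist u (W x) < \<eta>" using that by (auto simp: dist_real_def)
            moreover have "u \<in> {0..W b}" using Wrange[of s] Wrange[of t] that h st by auto
            ultimately show ?thesis using eta by (auto simp: dist_real_def)
          qed
          have i1: "integral {s..t} (\<lambda>y. \<phi> (W y) * w y) - \<phi> (W x) * (W t - W s)
              = integral {s..t} (\<lambda>y. (\<phi> (W y) - \<phi> (W x)) * w y)"
          proof -
            have "integral {s..t} (\<lambda>y. (\<phi> (W y) - \<phi> (W x)) * w y)
               = integral {s..t} (\<lambda>y. \<phi> (W y) * w y - \<phi> (W x) * w y)"
              by (simp add: algebra_simps)
            also have "\<dots> = integral {s..t} (\<lambda>y. \<phi> (W y) * w y) - integral {s..t} (\<lambda>y. \<phi> (W x) * w y)"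
              using h by (intro integral_diff prodsub integrable_on_mult_right wsub) auto
            also have "integral {s..t} (\<lambda>y. \<phi> (W x) * w y) = \<phi> (W x) * (W t - W s)"
              using Wint[of s t] h st by simp
            finally show ?thesis by simp
          qed
          have i1b: "\<bar>integral {s..t} (\<lambda>y. (\<phi> (W y) - \<phi> (W x)) * w y)\<bar> \<le> integral {s..t} (\<lambda>y. e/2 * w y)"
          proof -
            have "(\<lambda>y. \<phi> (W y) * w y - \<phi> (W x) * w y) integrable_on {s..t}"
              using h by (intro integrable_diff prodsub integrable_on_mult_right wsub) auto
            then have "(\<lambda>y. (\<phi> (W y) - \<phi> (W x)) * w y) integrable_on {s..t}"
              by (simp add: algebra_simps)
            moreover have "(\<lambda>y. e/2 * w y) integrable_on {s..t}"
              using h by (intro integrable_on_mult_right wsub) auto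
            moreover have "norm ((\<phi> (W y) - \<phi> (W x)) * w y) \<le> e/2 * w y" if "y \<in> {s..t}" for y
            proof -
              have "w y \<ge> 0" using wpos that h by auto
              then have "\<bar>\<phi> (W y) - \<phi> (W x)\<bar> * w y \<le> e/2 * w y"
                using b1[OF that] by (intro mult_right_mono) auto
              then show ?thesis using \<open>w y \<ge> 0\<close> by (simp add: abs_mult)
            qed
            ultimately have "norm (integral {s..t} (\<lambda>y. (\<phi> (W y) - \<phi> (W x)) * w y)) \<le> integral {s..t} (\<lambda>y. e/2 * w y)"
              by (intro integral_norm_bound_integral) auto
            then show ?thesis by simp
          qed
          have i1c: "integral {s..t} (\<lambda>y. e/2 * w y) = e/2 * (W t - W s)"
            using Wint[of s t] h st by simp
          have i2: "integral {W s..W t} \<phi> - \<phi> (W x) * (W t - W s)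
              = integral {W s..W t} (\<lambda>u. \<phi> u - \<phi> (W x))"
          proof -
            have "integral {W s..W t} (\<lambda>u. \<phi> u - \<phi> (W x)) = integral {W s..W t} \<phi> - integral {W s..W t} (\<lambda>u. \<phi> (W x))"
              using phisub[of "W s" "W t"] Wrange[of s] Wrange[of t] h st by (intro integral_diff) auto
            then show ?thesis using Wst by simp
          qed
          have i2b: "\<bar>integral {W s..W t} (\<lambda>u. \<phi> u - \<phi> (W x))\<bar> \<le> integral {W s..W t} (\<lambda>u. e/2)"
          proof -
            have "(\<lambda>u. \<phi> u - \<phi> (W x)) integrable_on {W s..W t}"
              using phisub[of "W s" "W t"] Wrange[of s] Wrange[of t] h st by (intro integrable_diff) auto
            then have "norm (integral {W s..W t} (\<lambda>u. \<phi> u - \<phi> (W x))) \<le> integral {W s..W t} (\<lambda>u. e/2)"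
              using b2 by (intro integral_norm_bound_integral) auto
            then show ?thesis by simp
          qed
          have i2c: "integral {W s..W t} (\<lambda>u. e/2) = e/2 * (W t - W s)" using Wst by simp
          show "\<bar>D s t\<bar> \<le> e * (W t - W s)"
            using i1 i1b i1c i2 i2b i2c unfolding D_def by linarith
        qed
      qed
    qed
    then show ?thesis unfolding P_def by simp
  qed
  have "D a b = 0"
  proof (rule ccontr)
    assume ne: "D a b \<noteq> 0"
    have Wb0: "W b \<ge> 0" using Wrange ab by auto
    define e where "e = \<bar>D a b\<bar> / (W b + 1)"
    have "e > 0" using ne Wb0 unfolding e_def by auto
    then have "\<bar>D a b\<bar> \<le> e * W b" using main Wa by simp
    also have "\<dots> = \<bar>D a b\<bar> * (W b / (W b + 1))" unfolding e_def by simp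
    also have "\<dots> < \<bar>D a b\<bar> * 1"
    proof (rule mult_strict_left_mono)
      show "W b / (W b + 1) < 1" using Wb0 by simp
    qed (use ne in auto)
    also have "\<dots> = \<bar>D a b\<bar>" by simp
    finally show False by simp
  qed
  then show ?thesis unfolding D_def W_def by simp
qed


lemma RL_facts:
  assumes "in_RL R L"
  shows "continuous_on {0..1} R" "R 1 = 1" "L \<ge> 1" "R 0 = 0" "L > 0"
    "\<And>x. x \<in> {0..1} \<Longrightarrow> R x \<in> {0..1}"
    "\<And>x. x \<in> {0..1} \<Longrightarrow> R (1 - x) = 1 - R x"
    "\<And>x y. x \<in> {0..1} \<Longrightarrow> y \<in> {0..1} \<Longrightarrow> \<bar>R x - R y\<bar> \<le> L * \<bar>x - y\<bar>"
proof -
  have R: "\<forall>x\<in>{0..1}. R x \<in> {0..1}" "R 0 = 0" "\<forall>x\<in>{0..1}. R x + R (1 - x) = 1" "L > 0"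
    "\<forall>x\<in>{0..1}. \<forall>y\<in>{0..1}. \<bar>R x - R y\<bar> \<le> L * \<bar>x - y\<bar>"
    using assms unfolding in_RL_def by auto
  show "R 0 = 0" "L > 0" by (fact R(2), fact R(4))
  show "\<And>x. x \<in> {0..1} \<Longrightarrow> R x \<in> {0..1}" using R(1) by auto
  show "R (1 - x) = 1 - R x" if "x \<in> {0..1}" for x
  proof -
    have "R x + R (1 - x) = 1" using R(3) that by blast
    then show ?thesis by linarith
  qed
  show lip: "\<And>x y. x \<in> {0..1} \<Longrightarrow> y \<in> {0..1} \<Longrightarrow> \<bar>R x - R y\<bar> \<le> L * \<bar>x - y\<bar>"
    using R(5) by auto
  have "R 0 + R (1 - 0) = 1" using bspec[OF R(3), of 0] by simp
  then show R1: "R 1 = 1" using R(2) by simp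
  show "L \<ge> 1" using lip[of 1 0] R1 R(2) by simp
  show "continuous_on {0..1} R"
    unfolding continuous_on_iff
  proof (intro ballI allI impI)
    fix x e :: real assume x: "x \<in> {0..1}" and e: "e > 0"
    show "\<exists>d>0. \<forall>x'\<in>{0..1}. dist x' x < d \<longrightarrow> dist (R x') (R x) < e"
    proof (intro exI[of _ "e / L"] conjI ballI impI)
      show "e / L > 0" using e R(4) by simp
      fix y assume y: "y \<in> {0..1}" and d: "dist y x < e / L"
      have "\<bar>R y - R x\<bar> \<le> L * \<bar>y - x\<bar>" using lip x y by auto
      also have "\<dots> < L * (e / L)" using d R(4) by (intro mult_strict_left_mono) (auto simp: dist_real_def)
      also have "\<dots> = e" using R(4) by simp
      finally show "dist (R y) (R x) < e" by (simp add: dist_real_def)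
    qed
  qed
qed

lemma cosR_int0:
  assumes "in_RL R L"
  shows "integral {0..1} (\<lambda>u. cos (pi * R u)) = 0"
proof -
  define \<phi> where "\<phi> u = cos (pi * R u)" for u
  have "integral {0..1} \<phi> = integral {-1..-0} (\<lambda>x. \<phi> (-x))"
    by (rule Henstock_Kurzweil_Integration.integral_reflect_real[symmetric])
  also have "\<dots> = integral {0..1} ((\<lambda>x. \<phi> (-x)) \<circ> ((+) (-1)))"
    using integral_shift_Icc_real[of 0 1 "\<lambda>x. \<phi> (-x)" "-1"] by simp
  also have "\<dots> = integral {0..1} (\<lambda>u. - \<phi> u)"
  proof (rule integral_cong)
    fix u :: real assume "u \<in> {0..1}"
    then have "R (1 - u) = 1 - R u" using RL_facts(7)[OF assms] by auto
    then show "((\<lambda>x. \<phi> (-x)) \<circ> (+) (- 1)) u = - \<phi> u"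
      unfolding \<phi>_def by (simp add: right_diff_distrib)
  qed
  also have "\<dots> = - integral {0..1} \<phi>" by (rule integral_neg)
  finally show ?thesis unfolding \<phi>_def by simp
qed

lemma sin_half_bound:
  fixes y :: real
  assumes "\<bar>y\<bar> \<le> pi / 2"
  shows "\<bar>sin y\<bar> \<ge> \<bar>y\<bar> / 2"
proof -
  have "\<bar>sin y - (\<Sum>m<3. sin_coeff m * y ^ m)\<bar> \<le> inverse (fact 3) * \<bar>y\<bar> ^ 3"
    by (rule Maclaurin_sin_bound)
  moreover have "(\<Sum>m<3. sin_coeff m * y ^ m) = y"
    by (simp add: numeral_3_eq_3 sin_coeff_Suc cos_coeff_def)
  moreover have "inverse (fact 3) * \<bar>y\<bar> ^ 3 = \<bar>y\<bar> ^ 3 / (6::real)"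
  proof -
    have f: "fact 3 = (6::real)" unfolding numeral_3_eq_3 by (simp add: fact_Suc)
    show ?thesis unfolding f by (simp add: field_simps)
  qed
  ultimately have 1: "\<bar>sin y - y\<bar> \<le> \<bar>y\<bar> ^ 3 / 6"
    by simp
  have "pi \<le> 3.2" using pi_approx(2) by (simp add: algebra_simps)
  then have ay: "\<bar>y\<bar> \<le> 1.6" using assms by simp
  have "\<bar>y\<bar> ^ 3 = \<bar>y\<bar> * \<bar>y\<bar>\<^sup>2" by (simp add: power3_eq_cube power2_eq_square)
  also have "\<dots> \<le> \<bar>y\<bar> * 3"
  proof (rule mult_left_mono)
    have "\<bar>y\<bar>\<^sup>2 \<le> 1.6\<^sup>2" using ay by (intro power_mono) auto
    then show "\<bar>y\<bar>\<^sup>2 \<le> 3" by (simp add: power2_eq_square)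
  qed simp
  finally have "\<bar>y\<bar> ^ 3 / 6 \<le> \<bar>y\<bar> / 2" by simp
  then show ?thesis using 1 by linarith
qed

lemma exp_diff_bound:
  fixes a b :: real
  assumes "\<bar>a - b\<bar> \<le> pi"
  shows "cmod (exp (\<i> * complex_of_real a) - exp (\<i> * complex_of_real b)) \<ge> \<bar>a - b\<bar> / 2"
proof -
  define y where "y = (a - b) / 2"
  have e: "exp (\<i> * complex_of_real a) - exp (\<i> * complex_of_real b) = Complex (cos a - cos b) (sin a - sin b)"
    by (simp add: cis_conv_exp[symmetric] complex_eq_iff)
  have "(cos a - cos b)\<^sup>2 + (sin a - sin b)\<^sup>2 = 2 - 2 * cos (a - b)"
    by (simp add: power2_eq_square cos_diff algebra_simps)
  also have "cos (a - b) = 1 - 2 * (sin y)\<^sup>2"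
  proof -
    have "2 * y = a - b" unfolding y_def by simp
    then show ?thesis using cos_double_sin[of y] by simp
  qed
  finally have eq: "(cos a - cos b)\<^sup>2 + (sin a - sin b)\<^sup>2 = (2 * \<bar>sin y\<bar>)\<^sup>2" by (simp add: power2_eq_square)
  have "cmod (exp (\<i> * complex_of_real a) - exp (\<i> * complex_of_real b)) = sqrt ((2 * \<bar>sin y\<bar>)\<^sup>2)"
    unfolding e cmod_def complex.sel eq by (rule refl)
  also have "\<dots> = 2 * \<bar>sin y\<bar>" by (subst real_sqrt_abs) simp
  finally have "cmod (exp (\<i> * complex_of_real a) - exp (\<i> * complex_of_real b)) = 2 * \<bar>sin y\<bar>" .
  moreover have "\<bar>sin y\<bar> \<ge> \<bar>y\<bar> / 2" using assms unfolding y_def by (intro sin_half_bound) auto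
  ultimately show ?thesis unfolding y_def by simp
qed

lemma deriv_nonneg_endpoints:
  fixes R r :: "real \<Rightarrow> real"
  assumes "in_RL R L" "\<forall>x\<in>{0..1}. (R has_real_derivative r x) (at x within {0..1})"
    "\<forall>x\<in>{0<..<1}. r x > 0"
  shows "\<forall>x\<in>{0..1}. r x \<ge> 0"
proof
  fix x :: real assume x: "x \<in> {0..1}"
  note RF = RL_facts[OF assms(1)]
  have lim: "((\<lambda>y. (R y - R x) / (y - x)) \<longlongrightarrow> r x) (at x within {0..1})"
    using assms(2) x has_field_derivative_iff by blast
  consider "x = 0" | "x = 1" | "x \<in> {0<..<1}" using x by fastforce
  then show "r x \<ge> 0"
  proof cases
    case 1
    have l: "((\<lambda>y. (R y - R x) / (y - x)) \<longlongrightarrow> r x) (at_right 0)"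
      using lim 1 at_within_Icc_at_right[of "0::real" 1] by simp
    show ?thesis
    proof (rule tendsto_lowerbound[OF l])
      show "\<forall>\<^sub>F y in at_right 0. 0 \<le> (R y - R x) / (y - x)"
        using eventually_at_right_real[of "0::real" 1, OF zero_less_one]
      proof (rule eventually_mono)
        fix y :: real assume "y \<in> {0<..<1}"
        then show "0 \<le> (R y - R x) / (y - x)" using RF(4) RF(6)[of y] 1 by auto
      qed
    qed simp
  next
    case 2
    have l: "((\<lambda>y. (R y - R x) / (y - x)) \<longlongrightarrow> r x) (at_left 1)"
      using lim 2 at_within_Icc_at_left[of "0::real" 1] by simp
    show ?thesis
    proof (rule tendsto_lowerbound[OF l])
      show "\<forall>\<^sub>F y in at_left 1. 0 \<le> (R y - R x) / (y - x)"
        using eventually_at_left_real[where a="1::real" and b=0, OF zero_less_one]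
      proof (rule eventually_mono)
        fix y :: real assume y: "y \<in> {0<..<1}"
        then have "R y - R x \<le> 0" using RF(2) RF(6)[of y] 2 by auto
        moreover have "y - x < 0" using y 2 by auto
        ultimately show "0 \<le> (R y - R x) / (y - x)" by (simp add: divide_nonpos_neg)
      qed
    qed simp
  next
    case 3
    then have "r x > 0" using assms(3) by blast
    then show ?thesis by simp
  qed
qed


lemma Rt_neg: "Rt R (- u) = - Rt R u"
  unfolding Rt_def by (simp add: sgn_minus)

lemma Rt_pos: "R 0 = 0 \<Longrightarrow> u \<ge> 0 \<Longrightarrow> Rt R u = R u"
  unfolding Rt_def by (cases "u = 0") auto

lemma cdf_odd:
  fixes g :: "real \<Rightarrow> real"
  assumes ev: "\<forall>y\<in>{-pi..pi}. g (-y) = g y" and x: "0 \<le> x" "x \<le> pi"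
  shows "cdf g (-x) = - cdf g x"
proof (cases "x = 0")
  case True then show ?thesis by (simp add: cdf_def dint_def)
next
  case False
  then have x0: "x > 0" using x by simp
  have "integral {-x..0} (tilde g) = integral {-x..0} (\<lambda>y. tilde g (-y))"
    by (rule integral_cong) (use ev x in \<open>auto simp: tilde_def\<close>)
  also have "\<dots> = integral {0..x} (tilde g)"
    using Henstock_Kurzweil_Integration.integral_reflect_real[of x 0 "tilde g"] by simp
  finally show ?thesis using x0 by (simp add: cdf_def dint_def)
qed

lemma basics:
  fixes f :: "real \<Rightarrow> real" and \<Delta> :: real
  assumes f_even: "\<forall>x\<in>{-pi..pi}. f (- x) = f x"
    and f_nonneg: "\<forall>x\<in>{-pi..pi}. f x \<ge> 0"
    and f_int: "f integrable_on {-pi..pi}"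
    and f_mass: "avg_pi f > 0"
    and Delta: "\<Delta> > 0"
  shows "\<And>x. tilde f x = f x / (pi * avg_pi f)"
    and "\<And>x. tilde (hfun f \<Delta>) x = (tilde f x + \<Delta>) / (1 + pi * \<Delta>)"
    and "f integrable_on {0..pi}"
    and "integral {0..pi} f = pi * avg_pi f"
    and "tilde f integrable_on {0..pi}"
    and "tilde (hfun f \<Delta>) integrable_on {0..pi}"
    and "integral {0..pi} (tilde f) = 1"
    and "\<And>x. x \<in> {-pi..pi} \<Longrightarrow> tilde f x \<ge> 0"
    and "\<And>x. x \<in> {-pi..pi} \<Longrightarrow> tilde (hfun f \<Delta>) x \<ge> 0"
    and "\<And>x. x \<in> {0..pi} \<Longrightarrow> cdf f x = integral {0..x} (tilde f)"
    and "\<And>x. x \<in> {0..pi} \<Longrightarrow> cdf (hfun f \<Delta>) x = integral {0..x} (tilde (hfun f \<Delta>))"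
    and "\<And>x. x \<in> {0..pi} \<Longrightarrow> cdf (hfun f \<Delta>) x = (cdf f x + \<Delta> * x) / (1 + pi * \<Delta>)"
    and "\<And>x. x \<in> {0..pi} \<Longrightarrow> 0 \<le> cdf f x \<and> cdf f x \<le> 1"
    and "\<And>x. x \<in> {0..pi} \<Longrightarrow> 0 \<le> cdf (hfun f \<Delta>) x \<and> cdf (hfun f \<Delta>) x \<le> 1"
    and "integral {0..pi} (tilde (hfun f \<Delta>)) = 1"
    and "\<And>x. x \<in> {0..pi} \<Longrightarrow> cdf (hfun f \<Delta>) (-x) = - cdf (hfun f \<Delta>) x"
    and "continuous_on {0..pi} (cdf (hfun f \<Delta>))"
proof -
  define c where "c = avg_pi f"
  have c: "c > 0" using f_mass c_def by simp
  have pc: "pi * c > 0" using c by simp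
  show ft: "\<And>x. tilde f x = f x / (pi * avg_pi f)" by (simp add: tilde_def)
  show fint: "f integrable_on {0..pi}"
    by (rule integrable_on_subinterval[OF f_int]) auto
  show If: "integral {0..pi} f = pi * avg_pi f" by (simp add: avg_pi_def)
  show ftint: "tilde f integrable_on {0..pi}"
    unfolding tilde_def by (intro integrable_on_divide fint)
  show ftI: "integral {0..pi} (tilde f) = 1"
    unfolding tilde_def using If f_mass by simp
  show ftpos: "\<And>x. x \<in> {-pi..pi} \<Longrightarrow> tilde f x \<ge> 0"
    unfolding tilde_def using f_nonneg f_mass by simp
  have hfun_eq: "hfun f \<Delta> = (\<lambda>x. c / (1 + pi * \<Delta>) * tilde f x + c / (1 + pi * \<Delta>) * \<Delta>)"
    by (rule ext) (simp add: hfun_def c_def algebra_simps add_divide_distrib)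
  have d: "1 + pi * \<Delta> > 0" using Delta by (simp add: add_pos_pos)
  have "integral {0..pi} (hfun f \<Delta>) = integral {0..pi} (\<lambda>x. c / (1 + pi * \<Delta>) * tilde f x) + integral {0..pi} (\<lambda>x. c / (1 + pi * \<Delta>) * \<Delta>)"
    unfolding hfun_eq by (rule integral_add) (rule integrable_on_mult_right[OF ftint], rule integrable_const_ivl)
  also have "\<dots> = c / (1 + pi * \<Delta>) * 1 + pi * (c / (1 + pi * \<Delta>) * \<Delta>)"
    by (subst integral_mult_right) (simp add: ftI)
  also have "\<dots> = c / (1 + pi * \<Delta>) * (1 + pi * \<Delta>)" by (simp add: algebra_simps add_divide_distrib)
  also have "\<dots> = c" using d by simp
  finally have avgh: "avg_pi (hfun f \<Delta>) = c / pi" by (simp add: avg_pi_def)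
  show ht: "\<And>x. tilde (hfun f \<Delta>) x = (tilde f x + \<Delta>) / (1 + pi * \<Delta>)"
  proof -
    fix x
    have "tilde (hfun f \<Delta>) x = hfun f \<Delta> x / c"
      unfolding tilde_def[of "hfun f \<Delta>"] avgh by simp
    also have "\<dots> = (c / (1 + pi * \<Delta>) * (tilde f x + \<Delta>)) / c"
      by (simp add: hfun_def c_def)
    also have "\<dots> = (tilde f x + \<Delta>) / (1 + pi * \<Delta>)" using c by simp
    finally show "tilde (hfun f \<Delta>) x = (tilde f x + \<Delta>) / (1 + pi * \<Delta>)" .
  qed
  have ht': "tilde (hfun f \<Delta>) = (\<lambda>x. tilde f x / (1 + pi * \<Delta>) + \<Delta> / (1 + pi * \<Delta>))"
    by (rule ext) (simp add: ht add_divide_distrib)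
  have ftsub: "tilde f integrable_on {0..x}" if "x \<in> {0..pi}" for x
    using that by (intro integrable_on_subinterval[OF ftint]) auto
  show htint: "tilde (hfun f \<Delta>) integrable_on {0..pi}"
    unfolding ht' by (intro integrable_add integrable_on_divide ftint) auto
  show "\<And>x. x \<in> {-pi..pi} \<Longrightarrow> tilde (hfun f \<Delta>) x \<ge> 0"
    unfolding ht using ftpos Delta d by (simp add: add_nonneg_nonneg less_imp_le)
  show Fx: "\<And>x. x \<in> {0..pi} \<Longrightarrow> cdf f x = integral {0..x} (tilde f)"
    by (simp add: cdf_def dint_def)
  show Hx: "\<And>x. x \<in> {0..pi} \<Longrightarrow> cdf (hfun f \<Delta>) x = integral {0..x} (tilde (hfun f \<Delta>))"
    by (simp add: cdf_def dint_def)
  show HF: "cdf (hfun f \<Delta>) x = (cdf f x + \<Delta> * x) / (1 + pi * \<Delta>)" if "x \<in> {0..pi}" for x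
  proof -
    have "integral {0..x} (tilde (hfun f \<Delta>)) = integral {0..x} (tilde f) / (1 + pi * \<Delta>) + x * (\<Delta> / (1 + pi * \<Delta>))"
      unfolding ht' using ftsub[OF that] that by (subst integral_add) (auto intro: integrable_on_divide)
    then show ?thesis using Hx[OF that] Fx[OF that] by (simp add: add_divide_distrib)
  qed
  show Frange: "0 \<le> cdf f x \<and> cdf f x \<le> 1" if "x \<in> {0..pi}" for x
  proof -
    have "integral {0..x} (tilde f) + integral {x..pi} (tilde f) = integral {0..pi} (tilde f)"
      using that by (intro Henstock_Kurzweil_Integration.integral_combine ftint) auto
    moreover have "integral {0..x} (tilde f) \<ge> 0"
      using that ftpos by (intro integral_nonneg ftsub) auto
    moreover have "integral {x..pi} (tilde f) \<ge> 0"
      using that ftpos by (intro integral_nonneg integrable_on_subinterval[OF ftint]) auto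
    ultimately show ?thesis using Fx[OF that] ftI by simp
  qed
  show "0 \<le> cdf (hfun f \<Delta>) x \<and> cdf (hfun f \<Delta>) x \<le> 1" if "x \<in> {0..pi}" for x
  proof -
    have "0 \<le> cdf f x + \<Delta> * x" using Frange[OF that] that Delta by simp
    moreover have "cdf f x + \<Delta> * x \<le> 1 + pi * \<Delta>"
      using Frange[OF that] that Delta by (simp add: mult_left_mono mult.commute add_mono)
    ultimately show ?thesis using HF[OF that] d by simp
  qed
  show "integral {0..pi} (tilde (hfun f \<Delta>)) = 1"
    unfolding ht' using ftint ftI d by (subst integral_add) (auto intro: integrable_on_divide simp: field_simps)
  show "\<And>x. x \<in> {0..pi} \<Longrightarrow> cdf (hfun f \<Delta>) (-x) = - cdf (hfun f \<Delta>) x"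
    by (rule cdf_odd) (use f_even in \<open>auto simp: hfun_def tilde_def\<close>)
  show "continuous_on {0..pi} (cdf (hfun f \<Delta>))"
    using indefinite_integral_continuous_1[OF htint] Hx by (subst continuous_on_cong) auto
qed


lemma part2:
  fixes f R r :: "real \<Rightarrow> real" and L \<Delta> lam :: real
  assumes f_even: "\<forall>x\<in>{-pi..pi}. f (- x) = f x"
    and f_nonneg: "\<forall>x\<in>{-pi..pi}. f x \<ge> 0"
    and f_int: "f integrable_on {-pi..pi}"
    and f_mass: "avg_pi f > 0"
    and R: "in_RL R L"
    and Delta: "\<Delta> > 0"
    and rd: "\<forall>x\<in>{0..1}. (R has_real_derivative r x) (at x within {0..1})"
    and rpos: "\<forall>x\<in>{0<..<1}. r x > 0"
    and lam: "lam \<in> {0<..<pi}"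
  shows "let \<alpha> = \<Delta> * pi / (1 + \<Delta> * pi);
                    Fl = cdf f lam;
                    Q = (INF x\<in>closed_segment Fl ((1 - \<alpha>) * Fl + \<alpha> * lam / pi). r x)
                in cmod (mech R (hfun f \<Delta>) lam - mech R f lam)
                     \<ge> \<alpha> * pi / 2 * Q * \<bar>Fl - lam / pi\<bar>"
proof -
  note B = basics[OF f_even f_nonneg f_int f_mass Delta]
  note RF = RL_facts[OF R]
  define \<alpha> where "\<alpha> = \<Delta> * pi / (1 + \<Delta> * pi)"
  define Fl where "Fl = cdf f lam"
  define Hl where "Hl = (1 - \<alpha>) * Fl + \<alpha> * lam / pi"
  define Q where "Q = (INF x\<in>closed_segment Fl Hl. r x)"
  have lam': "lam \<in> {0..pi}" using lam by auto
  have d: "1 + pi * \<Delta> > 0" using Delta by (simp add: add_pos_pos)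
  have a0: "\<alpha> \<ge> 0" unfolding \<alpha>_def using Delta d by (simp add: mult.commute)
  have HlH: "cdf (hfun f \<Delta>) lam = Hl"
  proof -
    have "cdf (hfun f \<Delta>) lam = (Fl + \<Delta> * lam) / (1 + pi * \<Delta>)" using B(12)[OF lam'] Fl_def by simp
    also have "\<dots> = (1 - \<alpha>) * Fl + \<alpha> * lam / pi"
    proof -
      have d': "1 + \<Delta> * pi = 1 + pi * \<Delta>" by (simp add: mult.commute)
      have a: "1 - \<Delta> * pi / (1 + pi * \<Delta>) = 1 / (1 + pi * \<Delta>)" using d by (simp add: field_simps)
      have b: "\<Delta> * pi / (1 + pi * \<Delta>) * lam / pi = \<Delta> * lam / (1 + pi * \<Delta>)" by simp
      show ?thesis unfolding \<alpha>_def d' a b by (simp add: add_divide_distrib)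
    qed
    finally show ?thesis unfolding Hl_def .
  qed
  have Fr: "0 \<le> Fl \<and> Fl \<le> 1" using B(13)[OF lam'] Fl_def by simp
  have Hr: "0 \<le> Hl \<and> Hl \<le> 1" using B(14)[OF lam'] HlH by simp
  have mh: "mech R (hfun f \<Delta>) lam = exp (\<i> * complex_of_real (pi * R Hl))"
    unfolding mech_def HlH using Rt_pos[of R Hl] RF(4) Hr by simp
  have mf: "mech R f lam = exp (\<i> * complex_of_real (pi * R Fl))"
    unfolding mech_def Fl_def[symmetric] using Rt_pos[of R Fl] RF(4) Fr by simp
  have RHr: "R Hl \<in> {0..1}" "R Fl \<in> {0..1}" using RF(6) Hr Fr by auto
  have "\<bar>pi * R Hl - pi * R Fl\<bar> = pi * \<bar>R Hl - R Fl\<bar>"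
    by (simp add: right_diff_distrib[symmetric] abs_mult)
  also have "\<dots> \<le> pi * 1" using RHr by (intro mult_left_mono) auto
  finally have "\<bar>pi * R Hl - pi * R Fl\<bar> \<le> pi" by simp
  then have c1: "cmod (mech R (hfun f \<Delta>) lam - mech R f lam) \<ge> pi * \<bar>R Hl - R Fl\<bar> / 2"
    unfolding mh mf using exp_diff_bound[of "pi * R Hl" "pi * R Fl"]
    by (simp add: right_diff_distrib[symmetric] abs_mult)
  have diffHF: "\<bar>Hl - Fl\<bar> = \<alpha> * \<bar>Fl - lam / pi\<bar>"
  proof -
    have "Hl - Fl = \<alpha> * (lam / pi - Fl)" by (simp add: Hl_def algebra_simps)
    then show ?thesis using a0 by (simp add: abs_mult abs_minus_commute)
  qed
  have key: "\<bar>R Hl - R Fl\<bar> \<ge> Q * \<bar>Hl - Fl\<bar>"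
  proof (cases "Hl = Fl")
    case True then show ?thesis by simp
  next
    case False
    define p where "p = min Fl Hl"
    define q where "q = max Fl Hl"
    have pq: "p < q" "0 \<le> p" "q \<le> 1" using False Fr Hr unfolding p_def q_def by auto
    have seg: "closed_segment Fl Hl = {p..q}"
      unfolding closed_segment_eq_real_ivl p_def q_def by auto
    have e1: "\<bar>R Hl - R Fl\<bar> = \<bar>R q - R p\<bar>" "\<bar>Hl - Fl\<bar> = q - p"
      unfolding p_def q_def by (auto simp: min_def max_def abs_minus_commute)
    have contpq: "continuous_on {p..q} R"
      using pq by (intro continuous_on_subset[OF RF(1)]) auto
    have dat: "(R has_real_derivative r x) (at x)" if "0 < x" "x < 1" for x
    proof -
      have "(R has_real_derivative r x) (at x within {0..1})" using rd that by auto
      moreover have "at x within {0..1} = at x" using that by (intro at_within_Icc_at) auto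
      ultimately show ?thesis by simp
    qed
    have "\<exists>l z. p < z \<and> z < q \<and> DERIV R z :> l \<and> R q - R p = (q - p) * l"
    proof (rule MVT[OF pq(1) contpq])
      fix x assume "p < x" "x < q"
      then have "(R has_real_derivative r x) (at x)" using dat pq by auto
      then show "R differentiable (at x)"
        using has_field_derivative_imp_has_derivative differentiableI by blast
    qed
    then obtain l z where z: "p < z" "z < q" "DERIV R z :> l" "R q - R p = (q - p) * l" by blast
    have lz: "l = r z" using DERIV_unique[OF z(3) dat] z pq by auto
    have rnn: "\<forall>x\<in>{0..1}. r x \<ge> 0" using deriv_nonneg_endpoints[OF R rd rpos] .
    have bdd: "bdd_below (r ` closed_segment Fl Hl)"
      unfolding seg bdd_below_def using rnn pq by (intro exI[of _ 0]) auto
    have "Q \<le> r z" unfolding Q_def using z by (intro cINF_lower[OF bdd]) (auto simp: seg)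
    then have "(q - p) * Q \<le> (q - p) * r z" using pq by (intro mult_left_mono) auto
    also have "\<dots> = \<bar>R q - R p\<bar>" using z(4) lz rnn z pq by (simp add: abs_mult)
    finally show ?thesis using e1 by (simp add: mult.commute)
  qed
  have "\<alpha> * pi / 2 * Q * \<bar>Fl - lam / pi\<bar> = pi / 2 * (Q * \<bar>Hl - Fl\<bar>)"
    using diffHF by simp
  also have "\<dots> \<le> pi / 2 * \<bar>R Hl - R Fl\<bar>" using key by (intro mult_left_mono) auto
  also have "\<dots> \<le> cmod (mech R (hfun f \<Delta>) lam - mech R f lam)" using c1 by simp
  finally show ?thesis unfolding Let_def \<alpha>_def[symmetric] Fl_def[symmetric] Hl_def[symmetric] Q_def[symmetric] .
qed


lemma expi: "exp (\<i> * complex_of_real t) = complex_of_real (cos t) + \<i> * complex_of_real (sin t)"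
  by (simp add: cis_conv_exp[symmetric] complex_eq_iff)

lemma final_arith:
  fixes S s L \<Delta> :: real
  assumes s: "s > 0" and L: "L \<ge> 1" and S0: "S \<ge> 0" and Sgt: "S > s / (L * pi)"
    and D: "\<Delta> > 0" and DB: "\<Delta> \<le> s / (L * pi\<^sup>2 * S - pi * s)"
  shows "\<Delta> * pi * S / (1 + pi * \<Delta>) \<le> s"
proof -
  have Lpi: "L * pi > 0" using L by simp
  have "s < L * pi * S" using Sgt Lpi by (simp add: field_simps)
  then have Dpos: "L * pi\<^sup>2 * S - pi * s > 0"
  proof -
    assume "s < L * pi * S"
    then have "pi * s < pi * (L * pi * S)" by simp
    then show ?thesis by (simp add: power2_eq_square algebra_simps)
  qed
  have DD: "\<Delta> * (L * pi\<^sup>2 * S - pi * s) \<le> s" using DB Dpos by (simp add: field_simps)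
  have main: "\<Delta> * pi * S - \<Delta> * pi * s \<le> s"
  proof (cases "S \<le> s")
    case True
    then have "\<Delta> * pi * S \<le> \<Delta> * pi * s" using D by (intro mult_left_mono) auto
    then show ?thesis using s by linarith
  next
    case False
    have "pi * S \<le> (L * pi) * (pi * S)"
    proof -
      have "1 * pi \<le> L * pi" by (rule mult_right_mono) (use L in auto)
      then have "L * pi \<ge> 1" using pi_ge_two by linarith
      then have "1 * (pi * S) \<le> (L * pi) * (pi * S)" by (intro mult_right_mono) (use S0 in auto)
      then show ?thesis by simp
    qed
    then have "\<Delta> * (pi * S) \<le> \<Delta> * ((L * pi) * (pi * S))" using D by (intro mult_left_mono) auto
    then have "\<Delta> * pi * S - \<Delta> * pi * s \<le> \<Delta> * (L * pi\<^sup>2 * S - pi * s)"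
      by (simp add: power2_eq_square algebra_simps)
    then show ?thesis using DD by linarith
  qed
  have d: "1 + pi * \<Delta> > 0" using D by (simp add: add_pos_pos)
  have "\<Delta> * pi * S \<le> s * (1 + pi * \<Delta>)" using main by (simp add: algebra_simps)
  then show ?thesis using d by (simp add: divide_le_eq)
qed


lemma part1:
  fixes f R :: "real \<Rightarrow> real" and L \<delta> \<Delta> :: real
  assumes f_even: "\<forall>x\<in>{-pi..pi}. f (- x) = f x"
    and f_nonneg: "\<forall>x\<in>{-pi..pi}. f x \<ge> 0"
    and f_int: "f integrable_on {-pi..pi}"
    and f_mass: "avg_pi f > 0"
    and R: "in_RL R L"
    and delta: "\<delta> > 0"
    and S_bdd: "bdd_above ((\<lambda>x. \<bar>pi * tilde f x - 1\<bar>) ` {0..pi})"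
    and S_gt: "sup_S f > sqrt \<delta> / (L * pi)"
    and Delta: "\<Delta> > 0"
    and DB: "\<Delta> \<le> sqrt \<delta> / (L * pi\<^sup>2 * sup_S f - pi * sqrt \<delta>)"
  shows "delta_LIP \<delta> (mech R (hfun f \<Delta>)) f"
proof -
  note B = basics[OF f_even f_nonneg f_int f_mass Delta]
  note RF = RL_facts[OF R]
  define c where "c = avg_pi f"
  have c: "c > 0" using f_mass c_def by simp
  define H where "H = cdf (hfun f \<Delta>)"
  define \<theta> where "\<theta> x = pi * R (H x)" for x
  define \<Psi> where "\<Psi> = mech R (hfun f \<Delta>)"
  have Hcont: "continuous_on {0..pi} H" using B(17) H_def by simp
  have Hr: "H x \<in> {0..1}" if "x \<in> {0..pi}" for x using B(14)[OF that] H_def by simp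
  have RH: "continuous_on {0..pi} (\<lambda>x. R (H x))"
    using Hr by (intro continuous_on_compose2[OF RF(1) Hcont]) auto
  have \<theta>cont: "continuous_on {0..pi} \<theta>" unfolding \<theta>_def by (intro continuous_intros RH)
  have cosc: "continuous_on {0..pi} (\<lambda>x. cos (\<theta> x))" by (intro continuous_intros \<theta>cont)
  have sinc: "continuous_on {0..pi} (\<lambda>x. sin (\<theta> x))" by (intro continuous_intros \<theta>cont)
  have \<Psi>pos: "\<Psi> x = exp (\<i> * complex_of_real (\<theta> x))" if "x \<in> {0..pi}" for x
    unfolding \<Psi>_def mech_def \<theta>_def H_def[symmetric] using Rt_pos[of R "H x"] RF(4) Hr[OF that] by simp
  have \<Psi>neg: "\<Psi> (-x) = exp (\<i> * complex_of_real (- \<theta> x))" if "x \<in> {0..pi}" for x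
  proof -
    have "cdf (hfun f \<Delta>) (-x) = - H x" using B(16)[OF that] H_def by simp
    then show ?thesis
      unfolding \<Psi>_def mech_def \<theta>_def using Rt_neg[of R "H x"] Rt_pos[of R "H x"] RF(4) Hr[OF that] by simp
  qed
  have fpos0: "\<forall>x\<in>{0..pi}. f x \<ge> 0" using f_nonneg by auto
  have cosint: "(\<lambda>x. cos (\<theta> x) * f x) integrable_on {0..pi}"
    by (rule cont_mult_integrable[OF cosc B(3) fpos0])
  have sinint: "(\<lambda>x. sin (\<theta> x) * f x) integrable_on {0..pi}"
    by (rule cont_mult_integrable[OF sinc B(3) fpos0])
  define C where "C = integral {0..pi} (\<lambda>x. cos (\<theta> x) * f x)"
  define Sn where "Sn = integral {0..pi} (\<lambda>x. sin (\<theta> x) * f x)"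
  define g where "g x = \<Psi> x * complex_of_real (f x)" for x
  have hp: "((\<lambda>x. complex_of_real (cos (\<theta> x) * f x) + \<i> * complex_of_real (sin (\<theta> x) * f x))
      has_integral (complex_of_real C + \<i> * complex_of_real Sn)) {0..pi}"
    unfolding C_def Sn_def
    by (intro has_integral_add has_integral_mult_right has_integral_of_real integrable_integral cosint sinint)
  have hn: "((\<lambda>x. complex_of_real (cos (\<theta> x) * f x) - \<i> * complex_of_real (sin (\<theta> x) * f x))
      has_integral (complex_of_real C - \<i> * complex_of_real Sn)) {0..pi}"
    unfolding C_def Sn_def
    by (intro has_integral_diff has_integral_mult_right has_integral_of_real integrable_integral cosint sinint)
  have gpos: "(g has_integral (complex_of_real C + \<i> * complex_of_real Sn)) {0..pi}"
  proof -
    have "g x = complex_of_real (cos (\<theta> x) * f x) + \<i> * complex_of_real (sin (\<theta> x) * f x)" if "x \<in> {0..pi}" for x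
      unfolding g_def \<Psi>pos[OF that] expi by (simp add: algebra_simps)
    then show ?thesis using hp by (subst has_integral_cong) auto
  qed
  have gneg0: "((\<lambda>x. g (-x)) has_integral (complex_of_real C - \<i> * complex_of_real Sn)) {0..pi}"
  proof -
    have "g (-x) = complex_of_real (cos (\<theta> x) * f x) - \<i> * complex_of_real (sin (\<theta> x) * f x)" if "x \<in> {0..pi}" for x
    proof -
      have "f (-x) = f x" using f_even that by auto
      then show ?thesis unfolding g_def \<Psi>neg[OF that] expi by (simp add: algebra_simps)
    qed
    then show ?thesis using hn by (subst has_integral_cong) auto
  qed
  have gneg: "(g has_integral (complex_of_real C - \<i> * complex_of_real Sn)) {-pi..0}"
    using has_integral_reflect_real[where f="\<lambda>x. g (-x)" and a=0 and b=pi] gneg0 by simp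
  have gall: "(g has_integral ((complex_of_real C - \<i> * complex_of_real Sn) + (complex_of_real C + \<i> * complex_of_real Sn))) {-pi..pi}"
    by (rule has_integral_combine[OF _ _ gneg gpos]) auto
  have ipPsi: "ip \<Psi> f = complex_of_real (C / pi)"
  proof -
    have "integral {-pi..pi} g = complex_of_real (2 * C)" using integral_unique[OF gall] by simp
    then show ?thesis unfolding ip_def g_def[symmetric] by simp
  qed
  have fp: "(f has_integral (pi * c)) {0..pi}"
  proof -
    have "(f has_integral integral {0..pi} f) {0..pi}" by (rule integrable_integral[OF B(3)])
    then show ?thesis using B(4) c_def by simp
  qed
  have fn0: "((\<lambda>x. f (-x)) has_integral (pi * c)) {0..pi}"
    using fp f_even by (subst has_integral_cong) auto
  have fn: "(f has_integral (pi * c)) {-pi..0}"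
    using has_integral_reflect_real[where f="\<lambda>x. f (-x)" and a=0 and b=pi] fn0 by simp
  have fall: "(f has_integral (pi * c + pi * c)) {-pi..pi}"
    by (rule has_integral_combine[OF _ _ fn fp]) auto
  have ip1: "ip (\<lambda>_. 1) f = complex_of_real c"
  proof -
    have "((\<lambda>x. complex_of_real (f x)) has_integral complex_of_real (pi * c + pi * c)) {-pi..pi}"
      by (rule has_integral_of_real[OF fall])
    then have "integral {-pi..pi} (\<lambda>x. complex_of_real (f x)) = complex_of_real (pi * c + pi * c)"
      by (rule integral_unique)
    then show ?thesis unfolding ip_def by simp
  qed
  have PP: "(\<lambda>x. \<Psi> x * cnj (\<Psi> x)) = (\<lambda>_. 1)"
  proof
    fix x
    have "norm (\<Psi> x) = 1" unfolding \<Psi>_def mech_def by simp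
    then show "\<Psi> x * cnj (\<Psi> x) = 1" using complex_norm_square[of "\<Psi> x"] by simp
  qed
  define K where "K = C / (pi * c)"
  have LIPeq: "LIP \<Psi> f = complex_of_real (1 - K\<^sup>2)"
    unfolding LIP_def PP ipPsi ip1 K_def using c
    by (simp add: power2_eq_square field_simps)
  define ft where "ft = tilde f"
  define ht where "ht = tilde (hfun f \<Delta>)"
  have ftpos: "\<forall>x\<in>{0..pi}. ft x \<ge> 0" using B(8) ft_def by auto
  have htpos: "\<forall>x\<in>{0..pi}. ht x \<ge> 0" using B(9) ht_def by auto
  have cft: "(\<lambda>x. cos (\<theta> x) * ft x) integrable_on {0..pi}"
    using cont_mult_integrable[OF cosc B(5) ftpos[unfolded ft_def]] ft_def by simp
  have cht: "(\<lambda>x. cos (\<theta> x) * ht x) integrable_on {0..pi}"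
    using cont_mult_integrable[OF cosc B(6) htpos[unfolded ht_def]] ht_def by simp
  have cc: "(\<lambda>x. cos (\<theta> x)) integrable_on {0..pi}"
    by (rule integrable_continuous_real[OF cosc])
  have Kint: "K = integral {0..pi} (\<lambda>x. cos (\<theta> x) * ft x)"
  proof -
    have "integral {0..pi} (\<lambda>x. cos (\<theta> x) * ft x) = integral {0..pi} (\<lambda>x. cos (\<theta> x) * f x / (pi * c))"
      by (rule integral_cong) (simp add: ft_def B(1) c_def)
    then show ?thesis unfolding K_def C_def by simp
  qed
  define k where "k = \<Delta> / (1 + pi * \<Delta>)"
  have d: "1 + pi * \<Delta> > 0" using Delta by (simp add: add_pos_pos)
  have split: "cos (\<theta> x) * ft x = cos (\<theta> x) * ht x + k * (pi * (cos (\<theta> x) * ft x) - cos (\<theta> x))" for x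
  proof -
    have "ht x = (ft x + \<Delta>) / (1 + pi * \<Delta>)" using B(2) ht_def ft_def by simp
    then have e: "ft x = ht x + k * (pi * ft x - 1)" unfolding k_def using d by (simp add: field_simps)
    have "cos (\<theta> x) * ft x = cos (\<theta> x) * (ht x + k * (pi * ft x - 1))" using e by simp
    also have "\<dots> = cos (\<theta> x) * ht x + k * (pi * (cos (\<theta> x) * ft x) - cos (\<theta> x))"
      by (simp add: algebra_simps)
    finally show ?thesis .
  qed
  have i2: "(\<lambda>x. pi * (cos (\<theta> x) * ft x) - cos (\<theta> x)) integrable_on {0..pi}"
    by (intro integrable_diff integrable_on_mult_right cft cc)
  have Ksplit: "K = integral {0..pi} (\<lambda>x. cos (\<theta> x) * ht x) + k * integral {0..pi} (\<lambda>x. pi * (cos (\<theta> x) * ft x) - cos (\<theta> x))"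
  proof -
    have "K = integral {0..pi} (\<lambda>x. cos (\<theta> x) * ht x + k * (pi * (cos (\<theta> x) * ft x) - cos (\<theta> x)))"
      unfolding Kint by (rule integral_cong) (rule split)
    also have "\<dots> = integral {0..pi} (\<lambda>x. cos (\<theta> x) * ht x) + integral {0..pi} (\<lambda>x. k * (pi * (cos (\<theta> x) * ft x) - cos (\<theta> x)))"
      by (intro integral_add cht integrable_on_mult_right i2)
    finally show ?thesis by simp
  qed
  have zero: "integral {0..pi} (\<lambda>x. cos (\<theta> x) * ht x) = 0"
  proof -
    have htI: "integral {0..pi} ht = 1" using B(15) ht_def by simp
    have phic: "continuous_on {0..integral {0..pi} ht} (\<lambda>u. cos (pi * R u))"
      unfolding htI by (intro continuous_intros RF(1))
    have "integral {0..pi} (\<lambda>x. cos (pi * R (integral {0..x} ht)) * ht x) = integral {0..integral {0..pi} ht} (\<lambda>u. cos (pi * R u))"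
      by (rule subst_int[OF _ B(6)[folded ht_def] htpos phic]) simp
    also have "\<dots> = 0" unfolding htI by (rule cosR_int0[OF R])
    finally have z: "integral {0..pi} (\<lambda>x. cos (pi * R (integral {0..x} ht)) * ht x) = 0" .
    have "integral {0..pi} (\<lambda>x. cos (\<theta> x) * ht x) = integral {0..pi} (\<lambda>x. cos (pi * R (integral {0..x} ht)) * ht x)"
      by (rule integral_cong) (simp add: \<theta>_def H_def B(11) ht_def)
    then show ?thesis using z by simp
  qed
  define S where "S = sup_S f"
  have Sb: "\<bar>pi * ft x - 1\<bar> \<le> S" if "x \<in> {0..pi}" for x
    unfolding S_def sup_S_def ft_def using cSUP_upper[OF that S_bdd] .
  have S0: "S \<ge> 0" using Sb[of 0] by simp
  have bnd: "\<bar>integral {0..pi} (\<lambda>x. pi * (cos (\<theta> x) * ft x) - cos (\<theta> x))\<bar> \<le> integral {0..pi} (\<lambda>x. S)"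
  proof -
    have "norm (integral {0..pi} (\<lambda>x. pi * (cos (\<theta> x) * ft x) - cos (\<theta> x))) \<le> integral {0..pi} (\<lambda>x. S)"
    proof (rule integral_norm_bound_integral[OF i2])
      show "(\<lambda>x. S) integrable_on {0..pi}" by (rule integrable_const_ivl)
      fix x assume x: "x \<in> {0..pi}"
      have "pi * (cos (\<theta> x) * ft x) - cos (\<theta> x) = cos (\<theta> x) * (pi * ft x - 1)" by (simp add: algebra_simps)
      then have "norm (pi * (cos (\<theta> x) * ft x) - cos (\<theta> x)) = \<bar>cos (\<theta> x)\<bar> * \<bar>pi * ft x - 1\<bar>"
        by (simp add: abs_mult)
      also have "\<dots> \<le> 1 * S" using Sb[OF x] by (intro mult_mono) auto
      finally show "norm (pi * (cos (\<theta> x) * ft x) - cos (\<theta> x)) \<le> S" by simp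
    qed
    then show ?thesis by simp
  qed
  have k0: "k \<ge> 0" unfolding k_def using Delta d by simp
  have "\<bar>K\<bar> = k * \<bar>integral {0..pi} (\<lambda>x. pi * (cos (\<theta> x) * ft x) - cos (\<theta> x))\<bar>"
    using Ksplit zero k0 by (simp add: abs_mult)
  also have "\<dots> \<le> k * (pi * S)" using bnd k0 by (intro mult_left_mono) auto
  also have "\<dots> = \<Delta> * pi * S / (1 + pi * \<Delta>)" unfolding k_def by simp
  also have "\<dots> \<le> sqrt \<delta>"
    by (rule final_arith) (use delta RF(3) S0 S_gt Delta DB S_def in auto)
  finally have Kb: "\<bar>K\<bar> \<le> sqrt \<delta>" .
  have "\<bar>K\<bar>\<^sup>2 \<le> (sqrt \<delta>)\<^sup>2" by (rule power_mono[OF Kb]) simp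
  then have "K\<^sup>2 \<le> (sqrt \<delta>)\<^sup>2" by simp
  then have "K\<^sup>2 \<le> \<delta>" using delta by simp
  then show ?thesis unfolding delta_LIP_def \<Psi>_def[symmetric] LIPeq by simp
qed


theorem theorem3:
  fixes f R :: "real \<Rightarrow> real" and L \<delta> \<Delta> :: real
  assumes f_even: "\<forall>x\<in>{-pi..pi}. f (- x) = f x"
    and f_nonneg: "\<forall>x\<in>{-pi..pi}. f x \<ge> 0"
    and f_int: "f integrable_on {-pi..pi}"
    and f_mass: "avg_pi f > 0"
    and R: "in_RL R L"
    and delta: "\<delta> > 0"
    and S_bdd: "bdd_above ((\<lambda>x. \<bar>pi * tilde f x - 1\<bar>) ` {0..pi})"
    and S_gt: "sup_S f > sqrt \<delta> / (L * pi)"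
    and Delta: "\<Delta> > 0"
  shows "(\<Delta> \<le> sqrt \<delta> / (L * pi\<^sup>2 * sup_S f - pi * sqrt \<delta>)
            \<longrightarrow> delta_LIP \<delta> (mech R (hfun f \<Delta>)) f)
       \<and> (\<forall>r. ((\<forall>x\<in>{0..1}. (R has_real_derivative r x) (at x within {0..1}))
               \<and> (\<forall>x\<in>{0<..<1}. r x > 0) \<and> (\<forall>x\<in>{0..pi}. f x > 0))
          \<longrightarrow> (\<forall>lam\<in>{0<..<pi}.
                let \<alpha> = \<Delta> * pi / (1 + \<Delta> * pi);
                    Fl = cdf f lam;
                    Q = (INF x\<in>closed_segment Fl ((1 - \<alpha>) * Fl + \<alpha> * lam / pi). r x)
                in cmod (mech R (hfun f \<Delta>) lam - mech R f lam)
                     \<ge> \<alpha> * pi / 2 * Q * \<bar>Fl - lam / pi\<bar>))"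
proof (intro conjI impI allI ballI)
  assume "\<Delta> \<le> sqrt \<delta> / (L * pi\<^sup>2 * sup_S f - pi * sqrt \<delta>)"
  then show "delta_LIP \<delta> (mech R (hfun f \<Delta>)) f"
    by (rule part1[OF f_even f_nonneg f_int f_mass R delta S_bdd S_gt Delta])
next
  fix r lam
  assume h: "(\<forall>x\<in>{0..1}. (R has_real_derivative r x) (at x within {0..1}))
               \<and> (\<forall>x\<in>{0<..<1}. r x > 0) \<and> (\<forall>x\<in>{0..pi}. f x > 0)"
    and lam: "lam \<in> {0<..<pi}"
  show "let \<alpha> = \<Delta> * pi / (1 + \<Delta> * pi);
                    Fl = cdf f lam;
                    Q = (INF x\<in>closed_segment Fl ((1 - \<alpha>) * Fl + \<alpha> * lam / pi). r x)
                in cmod (mech R (hfun f \<Delta>) lam - mech R f lam)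
                     \<ge> \<alpha> * pi / 2 * Q * \<bar>Fl - lam / pi\<bar>"
    using h by (intro part2[OF f_even f_nonneg f_int f_mass R Delta _ _ lam]) auto
qed

end
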